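(* Let $H$ be a finite group, $F$ a free group of rank $2$, $G=H\times F$, and let $A$ be a finite group of automorphisms of $G$ acting trivially on $F$, i.e. each $a\in A$ has the form $a(h,f)=(\alpha(h),f)$ for some automorphism $\alpha$ of $H$; put $n=|A|$. Then for every $z\in X$ in the $n$-valued coset group $X=(G,A)$ and every $y\in X$, the growth function $\xi_y(r)$ of the dynamic $T_z$ does not have exponential growth. In particular, for $H=\langle h\rangle$ cyclic of order $3$ and $A=\langle a\rangle$ with $a(h^i,f)=(h^{-i},f)$, the $2$-valued dynamic $T_z$ with $z=\pi((h,e))$ does not have exponential growth.
   Context: Coset group: for a group $G$ and finite $A\le\operatorname{Aut}(G)$ with $|A|=n$, $X=G/A$ is the set of $A$-orbits, $\pi:G\to X$ the projection, with $\pi(g)*\pi(h)=[\pi(g\,a(h)):a\in A]$, extended elementwise to multi-sets. The dynamic is $T_z(y)=y*z$ with iterates $T_z^r(y)=y*z*\dots*z$ ($r$ factors $z$); its growth function at $y$ is $\xi_y(r)=|\operatorname{Set}(T_z^r(y))|$, where $\operatorname{Set}$ gives the set of distinct elements of a multi-set. A function $f$ has exponential growth if $f(r)\ge c^r$ for some $c>1$ and all sufficiently large $r$. *)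

theory Defs
  imports "HOL-Algebra.Algebra" "HOL-Library.Multiset"
begin

text \<open>Letters of words over a two-element basis: first component selects the
generator (False = first, True = second), second component is the inverse flag.\<close>

definition fw_letter :: "('g, 'c) monoid_scheme \<Rightarrow> 'g \<Rightarrow> 'g \<Rightarrow> bool \<times> bool \<Rightarrow> 'g" where
  "fw_letter F x y l = (let g = (if fst l then y else x) in if snd l then inv\<^bsub>F\<^esub> g else g)"

definition fw_eval :: "('g, 'c) monoid_scheme \<Rightarrow> 'g \<Rightarrow> 'g \<Rightarrow> (bool \<times> bool) list \<Rightarrow> 'g" where
  "fw_eval F x y w = foldr (\<lambda>l acc. fw_letter F x y l \<otimes>\<^bsub>F\<^esub> acc) w \<one>\<^bsub>F\<^esub>"

definition fw_reduced :: "(bool \<times> bool) list \<Rightarrow> bool" where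
  "fw_reduced w = successively (\<lambda>p q. \<not> (fst p = fst q \<and> snd p \<noteq> snd q)) w"

definition free_group_rank2 :: "('g, 'c) monoid_scheme \<Rightarrow> bool" where
  "free_group_rank2 F \<longleftrightarrow> group F \<and>
     (\<exists>x\<in>carrier F. \<exists>y\<in>carrier F. generate F {x, y} = carrier F \<and>
        (\<forall>w. w \<noteq> [] \<and> fw_reduced w \<longrightarrow> fw_eval F x y w \<noteq> \<one>\<^bsub>F\<^esub>))"

definition cg_orbit :: "('g \<Rightarrow> 'g) set \<Rightarrow> 'g \<Rightarrow> 'g set" where
  "cg_orbit A g = (\<lambda>a. a g) ` A"

definition cg_space :: "('g, 'c) monoid_scheme \<Rightarrow> ('g \<Rightarrow> 'g) set \<Rightarrow> 'g set set" where
  "cg_space G A = cg_orbit A ` carrier G"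

definition cg_rep :: "('g, 'c) monoid_scheme \<Rightarrow> ('g \<Rightarrow> 'g) set \<Rightarrow> 'g set \<Rightarrow> 'g" where
  "cg_rep G A x = (SOME g. g \<in> carrier G \<and> cg_orbit A g = x)"

definition cg_mult :: "('g, 'c) monoid_scheme \<Rightarrow> ('g \<Rightarrow> 'g) set \<Rightarrow> 'g set \<Rightarrow> 'g set \<Rightarrow> 'g set multiset" where
  "cg_mult G A x y =
     image_mset (\<lambda>a. cg_orbit A (cg_rep G A x \<otimes>\<^bsub>G\<^esub> a (cg_rep G A y))) (mset_set A)"

definition cg_mult_ms :: "('g, 'c) monoid_scheme \<Rightarrow> ('g \<Rightarrow> 'g) set \<Rightarrow> 'g set multiset \<Rightarrow> 'g set \<Rightarrow> 'g set multiset" where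
  "cg_mult_ms G A M z = \<Sum>\<^sub># (image_mset (\<lambda>x. cg_mult G A x z) M)"

definition cg_iter :: "('g, 'c) monoid_scheme \<Rightarrow> ('g \<Rightarrow> 'g) set \<Rightarrow> 'g set \<Rightarrow> nat \<Rightarrow> 'g set \<Rightarrow> 'g set multiset" where
  "cg_iter G A z r y = ((\<lambda>M. cg_mult_ms G A M z) ^^ r) {#y#}"

definition cg_growth :: "('g, 'c) monoid_scheme \<Rightarrow> ('g \<Rightarrow> 'g) set \<Rightarrow> 'g set \<Rightarrow> 'g set \<Rightarrow> nat \<Rightarrow> nat" where
  "cg_growth G A z y r = card (set_mset (cg_iter G A z r y))"

definition exp_growth :: "(nat \<Rightarrow> nat) \<Rightarrow> bool" where
  "exp_growth f \<longleftrightarrow> (\<exists>c::real. c > 1 \<and> (\<forall>\<^sub>F r in sequentially. c ^ r \<le> real (f r)))"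

end

theory Submission
  imports Defs
begin

lemma gen_bounded:
  fixes H :: "('h, 'c) monoid_scheme" and F :: "('f, 'd) monoid_scheme"
    and A :: "('h \<times> 'f \<Rightarrow> 'h \<times> 'f) set"
  assumes mH: "monoid H" and mF: "monoid F" and fin: "finite (carrier H)"
    and Afin: "finite A" and Ane: "A \<noteq> {}"
    and Aprop: "\<forall>a\<in>A. \<forall>h\<in>carrier H. \<forall>f\<in>carrier F. snd (a (h,f)) = f \<and> fst (a (h,f)) \<in> carrier H"
    and z: "z \<in> cg_space (H \<times>\<times> F) A" and y: "y \<in> cg_space (H \<times>\<times> F) A"
  shows "\<not> exp_growth (cg_growth (H \<times>\<times> F) A z y)"
proof -
  let ?G = "H \<times>\<times> F"
  have orb: "cg_orbit A (h,f) \<subseteq> carrier H \<times> {f} \<and> cg_orbit A (h,f) \<noteq> {}"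
    if "h \<in> carrier H" "f \<in> carrier F" for h f
  proof -
    have I: "a (h,f) \<in> carrier H \<times> {f}" if "a \<in> A" for a
      using Aprop that \<open>h \<in> carrier H\<close> \<open>f \<in> carrier F\<close>
      by (auto simp: mem_Times_iff)
    have "(\<lambda>a. a (h,f)) ` A \<subseteq> carrier H \<times> {f}" using I by (rule image_subsetI)
    moreover have "(\<lambda>a. a (h,f)) ` A \<noteq> {}" using Ane by simp
    ultimately show ?thesis unfolding cg_orbit_def by (rule conjI)
  qed
  have rep: "cg_rep ?G A x \<in> carrier ?G \<and> cg_orbit A (cg_rep ?G A x) = x"
    if "x \<in> cg_space ?G A" for x
  proof -
    have "\<exists>g. g \<in> carrier ?G \<and> cg_orbit A g = x" using that unfolding cg_space_def by auto
    then show ?thesis unfolding cg_rep_def by (rule someI_ex)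
  qed
  have repsnd: "snd (cg_rep ?G A x) = f \<and> fst (cg_rep ?G A x) \<in> carrier H"
    if "x \<in> cg_space ?G A" "x \<subseteq> carrier H \<times> {f}" for x f
  proof -
    obtain h' f' where hf: "cg_rep ?G A x = (h',f')" by (cases "cg_rep ?G A x")
    have c: "h' \<in> carrier H" "f' \<in> carrier F" using rep[OF that(1)] hf by auto
    have "x = cg_orbit A (h',f')" using rep[OF that(1)] hf by simp
    with orb[OF c] that(2) have "f' = f" by blast
    then show ?thesis using hf c by simp
  qed
  obtain hz fz where zrep: "cg_rep ?G A z = (hz, fz)" by (cases "cg_rep ?G A z")
  have zc: "hz \<in> carrier H" "fz \<in> carrier F" using rep[OF z] zrep by auto
  define P where "P M f \<longleftrightarrow> f \<in> carrier F \<and> (\<forall>x\<in>set_mset M. x \<in> cg_space ?G A \<and> x \<subseteq> carrier H \<times> {f})"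
    for M f
  have step: "P (cg_mult_ms ?G A M z) (f \<otimes>\<^bsub>F\<^esub> fz)" if "P M f" for M f
  proof -
    have fc0: "f \<in> carrier F" using \<open>P M f\<close> P_def by simp
    have fzc: "f \<otimes>\<^bsub>F\<^esub> fz \<in> carrier F" by (rule monoid.m_closed[OF mF fc0 zc(2)])
    have "x' \<in> cg_space ?G A \<and> x' \<subseteq> carrier H \<times> {f \<otimes>\<^bsub>F\<^esub> fz}"
      if x': "x' \<in> set_mset (cg_mult_ms ?G A M z)" for x'
    proof -
      obtain x a where xa: "x \<in> set_mset M" "a \<in> A"
        and x'eq: "x' = cg_orbit A (cg_rep ?G A x \<otimes>\<^bsub>?G\<^esub> a (cg_rep ?G A z))"
        using x' Afin unfolding cg_mult_ms_def cg_mult_def by auto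
      have xs: "x \<in> cg_space ?G A" "x \<subseteq> carrier H \<times> {f}" using \<open>P M f\<close> xa(1) P_def by auto
      define hx where "hx = fst (cg_rep ?G A x)"
      have hx: "cg_rep ?G A x = (hx, f)" "hx \<in> carrier H"
        using repsnd[OF xs] unfolding hx_def by (auto simp: prod_eq_iff)
      define ha where "ha = fst (a (hz, fz))"
      have ha: "a (hz, fz) = (ha, fz)" "ha \<in> carrier H"
        using Aprop xa(2) zc unfolding ha_def by (auto simp: prod_eq_iff)
      have fc: "f \<in> carrier F" using \<open>P M f\<close> P_def by simp
      have e: "x' = cg_orbit A (hx \<otimes>\<^bsub>H\<^esub> ha, f \<otimes>\<^bsub>F\<^esub> fz)"
        using x'eq hx ha zrep by simp
      have c1: "hx \<otimes>\<^bsub>H\<^esub> ha \<in> carrier H" by (rule monoid.m_closed[OF mH hx(2) ha(2)])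
      have c2: "f \<otimes>\<^bsub>F\<^esub> fz \<in> carrier F" by (rule monoid.m_closed[OF mF fc zc(2)])
      have "x' \<in> cg_space ?G A" unfolding cg_space_def e by (rule imageI) (simp add: c1 c2)
      moreover have "x' \<subseteq> carrier H \<times> {f \<otimes>\<^bsub>F\<^esub> fz}" using e orb[OF c1 c2] by simp
      ultimately show ?thesis by (rule conjI)
    qed
    then show ?thesis using fzc unfolding P_def by blast
  qed
  obtain hy fy where yrep: "cg_rep ?G A y = (hy, fy)" by (cases "cg_rep ?G A y")
  have yc: "hy \<in> carrier H" "fy \<in> carrier F" using rep[OF y] yrep by auto
  have y0: "P {#y#} fy"
    using rep[OF y] yrep orb[OF yc] yc y unfolding P_def by auto
  have inv: "\<exists>f. P (cg_iter ?G A z r y) f" for r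
  proof (induction r)
    case 0 then show ?case using y0 unfolding cg_iter_def by auto
  next
    case (Suc r)
    then obtain f where "P (cg_iter ?G A z r y) f" by blast
    from step[OF this] show ?case unfolding cg_iter_def by auto
  qed
  define K where "K = card (Pow (carrier H \<times> (UNIV :: 'f set)) \<inter> {S. \<exists>f. S \<subseteq> carrier H \<times> {f}})"
  have bound: "cg_growth ?G A z y r \<le> 2 ^ card (carrier H)" for r
  proof -
    obtain f where Pf: "P (cg_iter ?G A z r y) f" using inv by blast
    have sub: "set_mset (cg_iter ?G A z r y) \<subseteq> Pow (carrier H \<times> {f})" using Pf P_def by auto
    have "card (set_mset (cg_iter ?G A z r y)) \<le> card (Pow (carrier H \<times> {f}))"
      using sub fin by (intro card_mono) auto
    also have "\<dots> = 2 ^ card (carrier H \<times> {f})" using fin by (simp add: card_Pow)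
    also have "card (carrier H \<times> {f}) = card (carrier H)" by (simp add: card_cartesian_product)
    finally show ?thesis unfolding cg_growth_def by simp
  qed
  show ?thesis
  proof
    assume "exp_growth (cg_growth ?G A z y)"
    then obtain c :: real where c: "c > 1" and ev: "\<forall>\<^sub>F r in sequentially. c ^ r \<le> real (cg_growth ?G A z y r)"
      unfolding exp_growth_def by blast
    then obtain N where N: "\<And>r. r \<ge> N \<Longrightarrow> c ^ r \<le> real (cg_growth ?G A z y r)"
      unfolding eventually_sequentially by blast
    obtain n where n: "real (2 ^ card (carrier H)) < c ^ n" using real_arch_pow[OF c] by blast
    have "c ^ n \<le> c ^ max N n" using c by (intro power_increasing) auto
    also have "\<dots> \<le> real (cg_growth ?G A z y (max N n))" using N by simp
    also have "\<dots> \<le> real (2 ^ card (carrier H))" using bound by (simp only: of_nat_le_iff)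
    finally show False using n by simp
  qed
qed

theorem mainTheorem9:
  fixes H :: "('h, 'c) monoid_scheme" and F :: "('f, 'd) monoid_scheme"
    and A :: "('h \<times> 'f \<Rightarrow> 'h \<times> 'f) set"
  assumes H: "group H" "finite (carrier H)"
    and F: "free_group_rank2 F"
    and A_sub: "subgroup A (AutoGroup (H \<times>\<times> F))"
    and A_fin: "finite A"
    and A_triv: "\<forall>a\<in>A. \<exists>\<alpha>\<in>auto H. \<forall>h\<in>carrier H. \<forall>f\<in>carrier F. a (h, f) = (\<alpha> h, f)"
  shows "(\<forall>z\<in>cg_space (H \<times>\<times> F) A. \<forall>y\<in>cg_space (H \<times>\<times> F) A.
            \<not> exp_growth (cg_growth (H \<times>\<times> F) A z y))
       \<and> (let H3 = integer_mod_group 3;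
              A3 = {(\<lambda>g\<in>carrier (H3 \<times>\<times> F). g),
                    (\<lambda>g\<in>carrier (H3 \<times>\<times> F). ((- fst g) mod 3, snd g))};
              z3 = cg_orbit A3 (1, \<one>\<^bsub>F\<^esub>)
          in \<forall>y\<in>cg_space (H3 \<times>\<times> F) A3. \<not> exp_growth (cg_growth (H3 \<times>\<times> F) A3 z3 y))"
proof
  have gF: "group F" using F unfolding free_group_rank2_def by blast
  have mF: "monoid F" using gF group.is_monoid by blast
  have mH: "monoid H" using H(1) group.is_monoid by blast
  have Ane: "A \<noteq> {}" using A_sub subgroup.one_closed by blast
  have Ap: "\<forall>a\<in>A. \<forall>h\<in>carrier H. \<forall>f\<in>carrier F. snd (a (h,f)) = f \<and> fst (a (h,f)) \<in> carrier H"
  proof (intro ballI)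
    fix a h f assume a: "a \<in> A" and h: "h \<in> carrier H" and f: "f \<in> carrier F"
    obtain \<alpha> where al: "\<alpha> \<in> auto H" "\<forall>h\<in>carrier H. \<forall>f\<in>carrier F. a (h, f) = (\<alpha> h, f)"
      using A_triv a by blast
    have "\<alpha> \<in> hom H H" using al(1) unfolding auto_def by (rule IntD1)
    then have "\<alpha> h \<in> carrier H" using h by (rule hom_in_carrier)
    then show "snd (a (h,f)) = f \<and> fst (a (h,f)) \<in> carrier H" using al(2) h f by simp
  qed
  show "\<forall>z\<in>cg_space (H \<times>\<times> F) A. \<forall>y\<in>cg_space (H \<times>\<times> F) A.
            \<not> exp_growth (cg_growth (H \<times>\<times> F) A z y)"
    using gen_bounded[OF mH mF H(2) A_fin Ane Ap] by blast
  show "let H3 = integer_mod_group 3;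
              A3 = {(\<lambda>g\<in>carrier (H3 \<times>\<times> F). g),
                    (\<lambda>g\<in>carrier (H3 \<times>\<times> F). ((- fst g) mod 3, snd g))};
              z3 = cg_orbit A3 (1, \<one>\<^bsub>F\<^esub>)
          in \<forall>y\<in>cg_space (H3 \<times>\<times> F) A3. \<not> exp_growth (cg_growth (H3 \<times>\<times> F) A3 z3 y)"
    unfolding Let_def
  proof (intro ballI)
    fix y
    let ?H3 = "integer_mod_group 3"
    let ?A3 = "{(\<lambda>g\<in>carrier (?H3 \<times>\<times> F). g),
                    (\<lambda>g\<in>carrier (?H3 \<times>\<times> F). ((- fst g) mod 3, snd g))}"
    assume y: "y \<in> cg_space (?H3 \<times>\<times> F) ?A3"
    have mH3: "monoid ?H3" using group.is_monoid group_integer_mod_group by blast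
    have c3: "carrier ?H3 = {0..<3}" by (simp add: carrier_integer_mod_group)
    have fin3: "finite (carrier ?H3)" using c3 by simp
    have Ap3: "\<forall>a\<in>?A3. \<forall>h\<in>carrier ?H3. \<forall>f\<in>carrier F. snd (a (h,f)) = f \<and> fst (a (h,f)) \<in> carrier ?H3"
    proof (intro ballI)
      fix a h f assume a: "a \<in> ?A3" and h: "h \<in> carrier ?H3" and f: "f \<in> carrier F"
      have hf: "(h,f) \<in> carrier (?H3 \<times>\<times> F)" using h f by simp
      have m: "(- h) mod 3 \<in> carrier ?H3" unfolding c3 by simp
      from a have "a = (\<lambda>g\<in>carrier (?H3 \<times>\<times> F). g) \<or> a = (\<lambda>g\<in>carrier (?H3 \<times>\<times> F). ((- fst g) mod 3, snd g))"
        by (simp only: insert_iff empty_iff simp_thms)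
      then show "snd (a (h,f)) = f \<and> fst (a (h,f)) \<in> carrier ?H3"
      proof
        assume "a = (\<lambda>g\<in>carrier (?H3 \<times>\<times> F). g)"
        then show ?thesis using hf h by (simp only: restrict_apply' fst_conv snd_conv, (simp)?)
      next
        assume "a = (\<lambda>g\<in>carrier (?H3 \<times>\<times> F). ((- fst g) mod 3, snd g))"
        then show ?thesis using hf m by (simp only: restrict_apply' fst_conv snd_conv, (simp)?)
      qed
    qed
    have oc: "(1::int) \<in> carrier ?H3" unfolding c3 by simp
    have z: "cg_orbit ?A3 (1, \<one>\<^bsub>F\<^esub>) \<in> cg_space (?H3 \<times>\<times> F) ?A3"
      unfolding cg_space_def using oc monoid.one_closed[OF mF] by (intro imageI) simp
    have finA3: "finite ?A3" by (rule finite.insertI, rule finite.insertI, rule finite.emptyI)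
    have neA3: "?A3 \<noteq> {}" by (rule insert_not_empty)
    show "\<not> exp_growth (cg_growth (?H3 \<times>\<times> F) ?A3 (cg_orbit ?A3 (1, \<one>\<^bsub>F\<^esub>)) y)"
      by (rule gen_bounded[OF mH3 mF fin3 finA3 neA3 Ap3 z y])
  qed
qed

end
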